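(* Let $A\in\mathbb{C}^{n\times n}$, let $\|\cdot\|$ be any vector norm on $\mathbb{C}^n$ with induced matrix norm, and let $y_0\in\mathbb{C}^n\setminus\{0\}$. Then $$\max_{\hat z_0\in\mathbb{C}^n,\ \|\hat z_0\|=1}\ \limsup_{t\to+\infty}\frac{K(t,y_0,\hat z_0)}{K(t,y_0)}=1 .$$ Moreover, if $y_0$ satisfies the RLGE condition, then, with $K_\infty(t,y_0,\hat z_0)=\|Q_1(t)\hat z_0\|/\|Q_1(t)\hat y_0\|$ and $K_\infty(t,y_0)=\|Q_1(t)\|/\|Q_1(t)\hat y_0\|$, $$\max_{\hat z_0\in\mathbb{C}^n,\ \|\hat z_0\|=1}\ \limsup_{t\to+\infty}\frac{K_\infty(t,y_0,\hat z_0)}{K_\infty(t,y_0)}=1 .$$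
   Context: $\hat y_0=y_0/\|y_0\|$; $K(t,y_0,\hat z_0)=\|e^{tA}\hat z_0\|/\|e^{tA}\hat y_0\|$ and $K(t,y_0)=\|e^{tA}\|/\|e^{tA}\hat y_0\|$. Let $\lambda_1,\dots,\lambda_p$ be the distinct eigenvalues of $A$, $\omega_i=\operatorname{Im}\lambda_i$. Fix a Jordan basis $v^{(i,j,k)}$ ($i\le p$, $j\le d_i$ with $d_i$ the geometric multiplicity, $k\le m_{ij}$) of Jordan chains: $(A-\lambda_iI)v^{(i,j,1)}=0$, $(A-\lambda_iI)v^{(i,j,k)}=v^{(i,j,k-1)}$ for $k\ge2$; $V$ the matrix of these columns in lexicographic order, $w^{(i,j,k)}$ the rows of $V^{-1}$; $\alpha_{ijk}(u)=w^{(i,j,k)}u$. $\Lambda_1$ is the set of eigenvalues of maximal real part, $M_1=\max_{\lambda_i\in\Lambda_1}\max_j m_{ij}$, $Q_1(t)=\sum_{\lambda_i\in\Lambda_1, m_{ij}=M_1}e^{\sqrt{-1}\omega_it}v^{(i,j,1)}w^{(i,j,M_1)}$. $u$ satisfies RLGE if $\alpha_{ijM_1}(u)\ne0$ for some $(i,j)$ with $\lambda_i\in\Lambda_1$, $m_{ij}=M_1$. *)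

theory Defs
  imports "HOL-Analysis.Analysis"
begin

definition mpow :: "complex^'n^'n \<Rightarrow> nat \<Rightarrow> complex^'n^'n" where
  "mpow A k = (((**) A) ^^ k) (mat 1)"

definition mexp :: "real \<Rightarrow> complex^'n^'n \<Rightarrow> complex^'n^'n" where
  "mexp t A = (\<Sum>k. (t ^ k / fact k) *\<^sub>R mpow A k)"

definition is_vec_norm :: "(complex^'n \<Rightarrow> real) \<Rightarrow> bool" where
  "is_vec_norm N \<longleftrightarrow>
     (\<forall>x. 0 \<le> N x) \<and> (\<forall>x. N x = 0 \<longleftrightarrow> x = 0) \<and>
     (\<forall>c x. N (c *s x) = cmod c * N x) \<and> (\<forall>x y. N (x + y) \<le> N x + N y)"

definition ind_norm :: "(complex^'n \<Rightarrow> real) \<Rightarrow> complex^'n^'n \<Rightarrow> real" where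
  "ind_norm N M = Sup {N (M *v x) | x. N x = 1}"

definition rowmul :: "complex^'n \<Rightarrow> complex^'n \<Rightarrow> complex" where
  "rowmul w u = (\<Sum>k\<in>UNIV. w $ k * u $ k)"

definition outer :: "complex^'n \<Rightarrow> complex^'n \<Rightarrow> complex^'n^'n" where
  "outer v w = (\<chi> a b. v $ a * w $ b)"

definition normalize :: "(complex^'n \<Rightarrow> real) \<Rightarrow> complex^'n \<Rightarrow> complex^'n" where
  "normalize N y = (complex_of_real (1 / N y)) *s y"

definition K3 :: "(complex^'n \<Rightarrow> real) \<Rightarrow> complex^'n^'n \<Rightarrow> real \<Rightarrow> complex^'n \<Rightarrow> complex^'n \<Rightarrow> real" where
  "K3 N A t y0 z0 = N (mexp t A *v z0) / N (mexp t A *v normalize N y0)"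

definition K2 :: "(complex^'n \<Rightarrow> real) \<Rightarrow> complex^'n^'n \<Rightarrow> real \<Rightarrow> complex^'n \<Rightarrow> real" where
  "K2 N A t y0 = ind_norm N (mexp t A) / N (mexp t A *v normalize N y0)"

(* Jordan data: eigenvalues lam i (i = 1..p), chains j = 1..d i of length m i j,
   chain vectors v i j k, dual rows w i j k (rows of V^{-1}). *)

definition maxRe :: "nat \<Rightarrow> (nat \<Rightarrow> complex) \<Rightarrow> real" where
  "maxRe p lam = Max ((\<lambda>i. Re (lam i)) ` {1..p})"

definition Lam1 :: "nat \<Rightarrow> (nat \<Rightarrow> complex) \<Rightarrow> nat set" where
  "Lam1 p lam = {i \<in> {1..p}. Re (lam i) = maxRe p lam}"

definition M1 :: "nat \<Rightarrow> (nat \<Rightarrow> complex) \<Rightarrow> (nat \<Rightarrow> nat) \<Rightarrow> (nat \<Rightarrow> nat \<Rightarrow> nat) \<Rightarrow> nat" where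
  "M1 p lam d m = Max {m i j | i j. i \<in> Lam1 p lam \<and> j \<in> {1..d i}}"

definition top_chains :: "nat \<Rightarrow> (nat \<Rightarrow> complex) \<Rightarrow> (nat \<Rightarrow> nat) \<Rightarrow> (nat \<Rightarrow> nat \<Rightarrow> nat) \<Rightarrow> (nat \<times> nat) set" where
  "top_chains p lam d m = {(i, j). i \<in> Lam1 p lam \<and> j \<in> {1..d i} \<and> m i j = M1 p lam d m}"

definition Q1 :: "nat \<Rightarrow> (nat \<Rightarrow> complex) \<Rightarrow> (nat \<Rightarrow> nat) \<Rightarrow> (nat \<Rightarrow> nat \<Rightarrow> nat)
    \<Rightarrow> (nat \<Rightarrow> nat \<Rightarrow> nat \<Rightarrow> complex^'n) \<Rightarrow> (nat \<Rightarrow> nat \<Rightarrow> nat \<Rightarrow> complex^'n) \<Rightarrow> real \<Rightarrow> complex^'n^'n" where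
  "Q1 p lam d m v w t = (\<Sum>(i, j)\<in>top_chains p lam d m.
      outer (exp (\<i> * complex_of_real (Im (lam i) * t)) *s v i j 1) (w i j (M1 p lam d m)))"

definition RLGE :: "nat \<Rightarrow> (nat \<Rightarrow> complex) \<Rightarrow> (nat \<Rightarrow> nat) \<Rightarrow> (nat \<Rightarrow> nat \<Rightarrow> nat)
    \<Rightarrow> (nat \<Rightarrow> nat \<Rightarrow> nat \<Rightarrow> complex^'n) \<Rightarrow> complex^'n \<Rightarrow> bool" where
  "RLGE p lam d m w u \<longleftrightarrow> (\<exists>(i, j)\<in>top_chains p lam d m. rowmul (w i j (M1 p lam d m)) u \<noteq> 0)"

definition Kinf3 :: "(complex^'n \<Rightarrow> real) \<Rightarrow> nat \<Rightarrow> (nat \<Rightarrow> complex) \<Rightarrow> (nat \<Rightarrow> nat) \<Rightarrow> (nat \<Rightarrow> nat \<Rightarrow> nat)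
    \<Rightarrow> (nat \<Rightarrow> nat \<Rightarrow> nat \<Rightarrow> complex^'n) \<Rightarrow> (nat \<Rightarrow> nat \<Rightarrow> nat \<Rightarrow> complex^'n) \<Rightarrow> real \<Rightarrow> complex^'n \<Rightarrow> complex^'n \<Rightarrow> real" where
  "Kinf3 N p lam d m v w t y0 z0 =
     N (Q1 p lam d m v w t *v z0) / N (Q1 p lam d m v w t *v normalize N y0)"

definition Kinf2 :: "(complex^'n \<Rightarrow> real) \<Rightarrow> nat \<Rightarrow> (nat \<Rightarrow> complex) \<Rightarrow> (nat \<Rightarrow> nat) \<Rightarrow> (nat \<Rightarrow> nat \<Rightarrow> nat)
    \<Rightarrow> (nat \<Rightarrow> nat \<Rightarrow> nat \<Rightarrow> complex^'n) \<Rightarrow> (nat \<Rightarrow> nat \<Rightarrow> nat \<Rightarrow> complex^'n) \<Rightarrow> real \<Rightarrow> complex^'n \<Rightarrow> real" where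
  "Kinf2 N p lam d m v w t y0 =
     ind_norm N (Q1 p lam d m v w t) / N (Q1 p lam d m v w t *v normalize N y0)"

end

theory Submission
  imports Defs
begin


lemma vec_sums2:
  fixes f :: "nat \<Rightarrow> 'a::real_normed_vector^'m^'n"
  assumes "\<And>i j. (\<lambda>k. f k $ i $ j) sums (L $ i $ j)"
  shows "f sums L"
proof -
  have e: "(\<Sum>k<n. f k) = (\<chi> i j. \<Sum>k<n. f k $ i $ j)" for n
    by (simp add: vec_eq_iff sum_component)
  have "(\<lambda>n. \<chi> i j. \<Sum>k<n. f k $ i $ j) \<longlonglongrightarrow> (\<chi> i j. L $ i $ j)"
    apply (intro tendsto_vec_lambda)
    using assms unfolding sums_def by blast
  then show ?thesis unfolding sums_def e by simp
qed

lemma mpow_Suc: "mpow A (Suc k) = A ** mpow A k"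
  by (simp add: mpow_def)

lemma mpow_0: "mpow A 0 = mat 1"
  by (simp add: mpow_def)

lemma mpow_add: "mpow A (a + b) = mpow A a ** mpow A b"
  by (induction a) (simp_all add: mpow_Suc mpow_0 matrix_mul_assoc matrix_mul_lid)

lemma mpow_bound:
  fixes A :: "complex^'n^'n"
  shows "cmod (mpow A k $ i $ j) \<le> (\<Sum>a\<in>UNIV. \<Sum>b\<in>UNIV. cmod (A $ a $ b)) ^ k"
proof (induction k arbitrary: i j)
  case 0
  then show ?case by (simp add: mpow_0 mat_def)
next
  case (Suc k)
  define B where "B = (\<Sum>a\<in>UNIV. \<Sum>b\<in>UNIV. cmod (A $ a $ b))"
  have "cmod (mpow A (Suc k) $ i $ j) = cmod (\<Sum>l\<in>UNIV. A $ i $ l * mpow A k $ l $ j)"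
    by (simp add: mpow_Suc matrix_matrix_mult_def)
  also have "\<dots> \<le> (\<Sum>l\<in>UNIV. cmod (A $ i $ l) * B ^ k)"
    apply (rule order_trans[OF norm_sum])
    apply (rule sum_mono)
    using Suc B_def by (simp add: norm_mult mult_left_mono)
  also have "\<dots> = (\<Sum>l\<in>UNIV. cmod (A $ i $ l)) * B ^ k"
    by (simp add: sum_distrib_right)
  also have "\<dots> \<le> B * B ^ k"
    apply (rule mult_right_mono)
    unfolding B_def
    apply (rule member_le_sum[of i UNIV "\<lambda>a. \<Sum>b\<in>UNIV. cmod (A $ a $ b)", simplified])
     apply (simp_all add: sum_nonneg)
    done
  finally show ?case by (simp add: B_def)
qed

lemma entry_summable:
  fixes A :: "complex^'n^'n"
  shows "summable (\<lambda>k. norm ((t ^ k / fact k) *\<^sub>R mpow A k $ i $ j))"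
proof -
  define B where "B = (\<Sum>a\<in>UNIV. \<Sum>b\<in>UNIV. cmod (A $ a $ b))"
  have B0: "B \<ge> 0" unfolding B_def by (simp add: sum_nonneg)
  show ?thesis
  proof (rule summable_comparison_test[OF _ summable_exp[of "\<bar>t\<bar> * B"]], intro exI allI impI)
    fix k
    have "norm (norm ((t ^ k / fact k) *\<^sub>R mpow A k $ i $ j))
        = \<bar>t\<bar> ^ k / fact k * cmod (mpow A k $ i $ j)"
      by (simp add: power_abs)
    also have "\<dots> \<le> \<bar>t\<bar> ^ k / fact k * B ^ k"
      by (rule mult_left_mono) (simp_all add: mpow_bound B_def)
    also have "\<dots> = inverse (fact k) * (\<bar>t\<bar> * B) ^ k"
      by (simp add: power_mult_distrib field_simps)
    finally show "norm (norm ((t ^ k / fact k) *\<^sub>R mpow A k $ i $ j))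
        \<le> inverse (fact k) * (\<bar>t\<bar> * B) ^ k" .
  qed
qed

lemma mexp_sums:
  fixes A :: "complex^'n^'n"
  shows "(\<lambda>k. (t ^ k / fact k) *\<^sub>R mpow A k) sums
    (\<chi> i j. \<Sum>k. (t ^ k / fact k) *\<^sub>R mpow A k $ i $ j)"
proof (rule vec_sums2)
  fix i j
  have "summable (\<lambda>k. (t ^ k / fact k) *\<^sub>R mpow A k $ i $ j)"
    by (rule summable_norm_cancel[OF entry_summable])
  then show "(\<lambda>k. ((t ^ k / fact k) *\<^sub>R mpow A k) $ i $ j) sums
    (\<chi> i j. \<Sum>k. (t ^ k / fact k) *\<^sub>R mpow A k $ i $ j) $ i $ j"
    by (simp add: summable_sums)
qed

lemma mexp_entry:
  fixes A :: "complex^'n^'n"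
  shows "mexp t A $ i $ j = (\<Sum>k. (t ^ k / fact k) *\<^sub>R mpow A k $ i $ j)"
  unfolding mexp_def sums_unique[OF mexp_sums, symmetric] by simp



lemma coeff_binom:
  fixes s t :: real
  shows "(\<Sum>q\<le>n. s ^ q / fact q * (t ^ (n - q) / fact (n - q))) = (s + t) ^ n / fact n"
  using exp_series_add_commuting[of s t n] by (simp add: divide_inverse mult.commute)

lemma mexp_add:
  fixes A :: "complex^'n^'n"
  shows "mexp s A ** mexp t A = mexp (s + t) A"
proof -
  have "(mexp s A ** mexp t A) $ i $ j = mexp (s + t) A $ i $ j" for i j
  proof -
    define a where "a l k = (s ^ k / fact k) *\<^sub>R mpow A k $ i $ l" for l k
    define b where "b l k = (t ^ k / fact k) *\<^sub>R mpow A k $ l $ j" for l k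
    have "(\<lambda>n. \<Sum>l\<in>UNIV. \<Sum>q\<le>n. a l q * b l (n - q)) sums
        (\<Sum>l\<in>UNIV. (\<Sum>k. a l k) * (\<Sum>k. b l k))"
      apply (rule sums_sum)
      apply (rule Cauchy_product_sums)
      unfolding a_def b_def by (rule entry_summable)+
    moreover have "(\<Sum>l\<in>UNIV. \<Sum>q\<le>n. a l q * b l (n - q)) = ((s + t) ^ n / fact n) *\<^sub>R mpow A n $ i $ j" for n
    proof -
      have "(\<Sum>l\<in>UNIV. \<Sum>q\<le>n. a l q * b l (n - q))
          = (\<Sum>q\<le>n. (s ^ q / fact q * (t ^ (n - q) / fact (n - q))) *\<^sub>R
               (\<Sum>l\<in>UNIV. mpow A q $ i $ l * mpow A (n - q) $ l $ j))"
        unfolding a_def b_def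
        by (subst sum.swap) (simp add: scaleR_sum_right algebra_simps)
      also have "\<dots> = (\<Sum>q\<le>n. (s ^ q / fact q * (t ^ (n - q) / fact (n - q))) *\<^sub>R
               mpow A n $ i $ j)"
      proof (rule sum.cong[OF refl])
        fix q assume "q \<in> {..n}"
        then have "mpow A n = mpow A q ** mpow A (n - q)"
          by (simp add: mpow_add[symmetric])
        then show "(s ^ q / fact q * (t ^ (n - q) / fact (n - q))) *\<^sub>R
               (\<Sum>l\<in>UNIV. mpow A q $ i $ l * mpow A (n - q) $ l $ j) =
              (s ^ q / fact q * (t ^ (n - q) / fact (n - q))) *\<^sub>R mpow A n $ i $ j"
          by (simp add: matrix_matrix_mult_def)
      qed
      also have "\<dots> = ((s + t) ^ n / fact n) *\<^sub>R mpow A n $ i $ j"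
        by (simp only: scaleR_sum_left[symmetric] coeff_binom)
      finally show ?thesis .
    qed
    ultimately have "(\<lambda>n. ((s + t) ^ n / fact n) *\<^sub>R mpow A n $ i $ j) sums
        (\<Sum>l\<in>UNIV. (\<Sum>k. a l k) * (\<Sum>k. b l k))" by simp
    then have "mexp (s + t) A $ i $ j = (\<Sum>l\<in>UNIV. (\<Sum>k. a l k) * (\<Sum>k. b l k))"
      unfolding mexp_entry by (rule sums_unique[symmetric])
    also have "\<dots> = (mexp s A ** mexp t A) $ i $ j"
      unfolding a_def b_def by (simp add: matrix_matrix_mult_def mexp_entry)
    finally show ?thesis by simp
  qed
  then show ?thesis by (simp add: vec_eq_iff)
qed

lemma mexp_0: "mexp 0 A = mat 1"
proof -
  have "(\<lambda>k. ((0::real) ^ k / fact k) *\<^sub>R mpow A k) = (\<lambda>k. if k = 0 then mpow A 0 else 0)"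
    by auto
  then have "(\<lambda>k. ((0::real) ^ k / fact k) *\<^sub>R mpow A k) sums mpow A 0"
    using sums_single[of 0 "\<lambda>_. mpow A 0"] by simp
  then show ?thesis unfolding mexp_def by (simp add: sums_unique[symmetric] mpow_0)
qed

lemma mexp_inj:
  fixes A :: "complex^'n^'n"
  assumes "mexp t A *v x = 0" shows "x = 0"
proof -
  have "x = (mexp (-t) A ** mexp t A) *v x" by (simp add: mexp_add mexp_0)
  also have "\<dots> = 0" by (simp add: matrix_vector_mul_assoc[symmetric] assms)
  finally show ?thesis .
qed



context
  fixes N :: "complex^'n \<Rightarrow> real"
  assumes Nn: "is_vec_norm N"
begin

lemma ofreal_smult: "complex_of_real c *s x = c *\<^sub>R x"
proof -
  have "(complex_of_real c *s x) $ i = (c *\<^sub>R x) $ i" for i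
    unfolding vector_smult_component vector_scaleR_component by (simp add: scaleR_conv_of_real)
  then show ?thesis by (simp add: vec_eq_iff)
qed

lemma N_nonneg: "0 \<le> N x" using Nn by (simp add: is_vec_norm_def)
lemma N_eq0: "N x = 0 \<longleftrightarrow> x = 0" using Nn by (simp add: is_vec_norm_def)
lemma N_scale: "N (c *s x) = cmod c * N x" using Nn by (simp add: is_vec_norm_def)
lemma N_tri: "N (x + y) \<le> N x + N y" using Nn by (simp add: is_vec_norm_def)
lemma N_zero[simp]: "N 0 = 0" using N_eq0 by simp

lemma N_minus: "N (- x) = N x"
proof -
  have "- x = (-1) *s x" by (simp add: vec_eq_iff)
  then have "N (- x) = cmod (-1) * N x" using N_scale by metis
  then show ?thesis by simp
qed

lemma N_diff: "N x - N y \<le> N (x - y)"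
  using N_tri[of "x - y" y] by simp

lemma N_sum: "finite S \<Longrightarrow> N (sum f S) \<le> (\<Sum>i\<in>S. N (f i))"
proof (induction S rule: finite_induct)
  case (insert a F)
  have "N (sum f (insert a F)) = N (f a + sum f F)" using insert by simp
  also have "\<dots> \<le> N (f a) + N (sum f F)" by (rule N_tri)
  also have "\<dots> \<le> N (f a) + (\<Sum>i\<in>F. N (f i))" using insert by simp
  finally show ?case using insert by simp
qed simp

lemma N_upper: "\<exists>C\<ge>0. \<forall>x. N x \<le> C * norm x"
proof (intro exI[of _ "\<Sum>i\<in>UNIV. N (axis i 1)"] conjI allI)
  show "0 \<le> (\<Sum>i\<in>UNIV. N (axis i 1))" by (simp add: sum_nonneg N_nonneg)
  fix x
  have "N x = N (\<Sum>i\<in>UNIV. x $ i *s axis i 1)" by (simp add: basis_expansion)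
  also have "\<dots> \<le> (\<Sum>i\<in>UNIV. cmod (x $ i) * N (axis i 1))"
    by (rule order_trans[OF N_sum]) (simp_all add: N_scale)
  also have "\<dots> \<le> (\<Sum>i\<in>UNIV. norm x * N (axis i 1))"
    by (intro sum_mono mult_right_mono Finite_Cartesian_Product.norm_nth_le N_nonneg)
  finally show "N x \<le> (\<Sum>i\<in>UNIV. N (axis i 1)) * norm x"
    by (simp add: sum_distrib_left mult.commute)
qed

lemma N_cont: "continuous_on S N"
proof -
  obtain C where C: "C \<ge> 0" "\<And>x. N x \<le> C * norm x" using N_upper by blast
  have "C-lipschitz_on S N"
    unfolding lipschitz_on_def
  proof (intro conjI ballI C(1))
    fix x y
    have "N x - N y \<le> C * norm (x - y)" using N_diff C(2) order_trans by blast
    moreover have "N y - N x \<le> C * norm (x - y)"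
      using N_diff[of y x] C(2)[of "y - x"] by (simp add: norm_minus_commute)
    ultimately show "dist (N x) (N y) \<le> C * dist x y"
      by (simp add: dist_norm abs_le_iff)
  qed
  then show ?thesis by (rule lipschitz_on_continuous_on)
qed

lemma N_lower: "\<exists>c>0. \<forall>x. c * norm x \<le> N x"
proof -
  have "sphere (0::complex^'n) 1 \<noteq> {}" by simp
  then obtain x0 where x0: "x0 \<in> sphere 0 1" "\<And>y. y \<in> sphere 0 1 \<Longrightarrow> N x0 \<le> N y"
    using continuous_attains_inf[OF compact_sphere _ N_cont] by blast
  have "x0 \<noteq> 0" using x0(1) by auto
  then have pos: "N x0 > 0" using N_eq0 N_nonneg less_eq_real_def by metis
  show ?thesis
  proof (intro exI[of _ "N x0"] conjI allI pos)
    fix x :: "complex^'n"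
    show "N x0 * norm x \<le> N x"
    proof (cases "x = 0")
      case False
      define y where "y = complex_of_real (1 / norm x) *s x"
      have ny: "norm y = 1" unfolding y_def using False
        by (simp add: ofreal_smult[of "1 / norm x", simplified])
      then have "N x0 \<le> N y" using x0(2) by simp
      also have "N y = N x / norm x" unfolding y_def using False by (simp add: N_scale norm_divide)
      finally show ?thesis using False by (simp add: field_simps)
    qed simp
  qed
qed

lemma N_compact: "compact {x. N x = 1}"
proof -
  obtain c where c: "c > 0" "\<And>x. c * norm x \<le> N x" using N_lower by blast
  have "bounded {x. N x = 1}"
    unfolding bounded_iff
  proof (intro exI[of _ "1 / c"] ballI)
    fix x assume "x \<in> {x. N x = 1}"
    then show "norm x \<le> 1 / c" using c(2)[of x] c(1) by (simp add: field_simps)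
  qed
  moreover have "closed {x. N x = 1}"
    by (rule closed_Collect_eq) (simp_all add: N_cont)
  ultimately show ?thesis by (simp add: compact_eq_bounded_closed)
qed

lemma N_mat_bound: "\<exists>K. \<forall>x. N (M *v x) \<le> K * N x"
proof -
  obtain c where c: "c > 0" "\<And>x. c * norm x \<le> N x" using N_lower by blast
  obtain C where C: "C \<ge> 0" "\<And>x. N x \<le> C * norm x" using N_upper by blast
  have "bounded_linear (\<lambda>x. M *v x)"
    using matrix_vector_mul_linear linear_conv_bounded_linear by blast
  then obtain K where K: "K \<ge> 0" "\<And>x. norm (M *v x) \<le> norm x * K"
    using bounded_linear.nonneg_bounded by blast
  show ?thesis
  proof (intro exI[of _ "C * K / c"] allI)
    fix x
    have "N (M *v x) \<le> C * (norm x * K)"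
    proof -
      have "C * norm (M *v x) \<le> C * (norm x * K)" using K(2)[of x] C(1) by (rule mult_left_mono)
      then show ?thesis using C(2)[of "M *v x"] by linarith
    qed
    also have "\<dots> \<le> C * K / c * N x"
    proof -
      have "norm x \<le> N x / c" using c(2)[of x] c(1) by (simp add: field_simps)
      then have "(C * K) * norm x \<le> (C * K) * (N x / c)"
        using C(1) K(1) by (intro mult_left_mono) simp_all
      then show ?thesis by (simp add: algebra_simps)
    qed
    finally show "N (M *v x) \<le> C * K / c * N x" .
  qed
qed

end


context
  fixes N :: "complex^'n \<Rightarrow> real"
  assumes Nn: "is_vec_norm N"
begin

lemma ind_bdd: "bdd_above {N (M *v x) | x. N x = 1}"
proof -
  obtain K where "\<And>x. N (M *v x) \<le> K * N x" using N_mat_bound[OF Nn] by blast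
  then have "\<forall>y\<in>{N (M *v x) | x. N x = 1}. y \<le> K" by (auto, metis mult.right_neutral)
  then show ?thesis unfolding bdd_above_def by blast
qed

lemma ind_upper: "N x = 1 \<Longrightarrow> N (M *v x) \<le> ind_norm N M"
  unfolding ind_norm_def by (rule cSup_upper[OF _ ind_bdd]) blast

lemma ind_scale: "N (M *v x) \<le> ind_norm N M * N x"
proof (cases "x = 0")
  case False
  then have pos: "N x > 0" using N_eq0[OF Nn] N_nonneg[OF Nn] less_eq_real_def by metis
  define y where "y = complex_of_real (1 / N x) *s x"
  have "N y = 1" unfolding y_def using pos by (simp add: N_scale[OF Nn] norm_divide)
  then have "N (M *v y) \<le> ind_norm N M" by (rule ind_upper)
  moreover have "M *v y = complex_of_real (1 / N x) *s (M *v x)"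
    unfolding y_def by (simp add: vec_eq_iff matrix_vector_mult_def sum_distrib_left algebra_simps)
  ultimately have "N (M *v x) / N x \<le> ind_norm N M"
    using pos by (simp add: N_scale[OF Nn] norm_divide)
  then show ?thesis using pos by (simp add: field_simps)
qed (simp add: N_zero[OF Nn])

lemma ind_approx:
  assumes "N u = 1" "e > 0"
  shows "\<exists>x. N x = 1 \<and> ind_norm N M - e < N (M *v x)"
proof -
  have "{N (M *v x) | x. N x = 1} \<noteq> {}" using assms by blast
  from less_cSupD[OF this, of "ind_norm N M - e"] assms(2)
  show ?thesis unfolding ind_norm_def by auto
qed

lemma ratio_le1:
  assumes "N z = 1"
  shows "(N (M *v z) / b) / (ind_norm N M / b) \<le> 1"
proof (cases "b = 0 \<or> ind_norm N M = 0")
  case False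
  have "N (M *v z) \<le> ind_norm N M" using ind_upper[OF assms] .
  moreover have "ind_norm N M \<ge> 0" using N_nonneg[OF Nn] \<open>N (M *v z) \<le> _\<close> order_trans by blast
  ultimately show ?thesis using False by (simp add: divide_le_eq_1)
qed auto

lemma limsup_main:
  fixes M :: "real \<Rightarrow> complex^'n^'n"
  assumes u: "N u = 1" and freq: "\<forall>T. \<exists>t\<ge>T. M t *v u \<noteq> 0"
  shows "\<exists>z. N z = 1 \<and>
    Limsup at_top (\<lambda>t. ereal ((N (M t *v z) / N (M t *v u)) / (ind_norm N (M t) / N (M t *v u)))) = 1"
proof -
  define R where "R t z = (N (M t *v z) / N (M t *v u)) / (ind_norm N (M t) / N (M t *v u))" for t z
  have "\<forall>k::nat. \<exists>t. real k \<le> t \<and> M t *v u \<noteq> 0" using freq by blast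
  then obtain tk where tk: "\<And>k. real k \<le> tk k" "\<And>k. M (tk k) *v u \<noteq> 0" by metis
  define I where "I k = ind_norm N (M (tk k))" for k
  have bpos: "N (M (tk k) *v u) > 0" for k
    using tk(2)[of k] N_eq0[OF Nn] N_nonneg[OF Nn] less_eq_real_def by metis
  have Ipos: "I k > 0" for k
    using ind_upper[OF u, of "M (tk k)"] bpos[of k] unfolding I_def by linarith
  have "\<forall>k. \<exists>x. N x = 1 \<and> I k - I k / (real k + 1) < N (M (tk k) *v x)"
    using ind_approx[OF u] Ipos unfolding I_def by simp
  then obtain zk where zk: "\<And>k. N (zk k) = 1" "\<And>k. I k - I k / (real k + 1) < N (M (tk k) *v zk k)"
    by metis
  obtain z r where z: "z \<in> {x. N x = 1}" and r: "strict_mono r" and lim: "(zk \<circ> r) \<longlonglongrightarrow> z"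
    using seq_compactE[OF compact_imp_seq_compact[OF N_compact[OF Nn]], of zk] zk(1) by blast
  have Nz: "N z = 1" using z by simp
  define e where "e k = inverse (real (Suc (r k))) + N (zk (r k) - z)" for k
  have key: "1 - e k \<le> R (tk (r k)) z" for k
  proof -
    let ?M = "M (tk (r k))" and ?I = "I (r k)"
    have "N (?M *v zk (r k)) - N (?M *v z) \<le> N (?M *v zk (r k) - ?M *v z)"
      by (rule N_diff[OF Nn])
    also have "?M *v zk (r k) - ?M *v z = ?M *v (zk (r k) - z)"
      by (simp add: matrix_vector_mult_diff_distrib)
    also have "N \<dots> \<le> ?I * N (zk (r k) - z)" unfolding I_def by (rule ind_scale)
    finally have 1: "?I - ?I / (real (r k) + 1) - ?I * N (zk (r k) - z) < N (?M *v z)"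
      using zk(2)[of "r k"] by linarith
    have "R (tk (r k)) z = N (?M *v z) / ?I"
      unfolding R_def I_def using bpos[of "r k"] Ipos[of "r k"] unfolding I_def by (simp add: field_simps)
    moreover have "1 - e k = (?I - ?I / (real (r k) + 1) - ?I * N (zk (r k) - z)) / ?I"
    proof -
      have q: "real (r k) + 1 > 0" by simp
      have "(?I - ?I / (real (r k) + 1) - ?I * N (zk (r k) - z)) / ?I
          = 1 - 1 / (real (r k) + 1) - N (zk (r k) - z)"
        using Ipos[of "r k"] q by (simp add: diff_divide_distrib)
      moreover have "inverse (real (Suc (r k))) = 1 / (real (r k) + 1)"
        by (simp add: inverse_eq_divide)
      ultimately show ?thesis unfolding e_def by simp
    qed
    ultimately show ?thesis using 1 Ipos[of "r k"] by (simp add: divide_right_mono)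
  qed
  have e0: "e \<longlonglongrightarrow> 0"
  proof -
    have a: "(\<lambda>k. inverse (real (Suc (r k)))) \<longlonglongrightarrow> 0"
      using LIMSEQ_subseq_LIMSEQ[OF LIMSEQ_inverse_real_of_nat r] by (simp add: o_def)
    have "(\<lambda>k. zk (r k) - z) \<longlonglongrightarrow> 0"
      using lim by (simp add: o_def LIM_zero)
    moreover have "isCont N 0"
      using N_cont[OF Nn, of UNIV] continuous_on_eq_continuous_at by blast
    ultimately have b: "(\<lambda>k. N (zk (r k) - z)) \<longlonglongrightarrow> 0"
      using isCont_tendsto_compose[of 0 N] N_zero[OF Nn] by fastforce
    show ?thesis unfolding e_def using tendsto_add[OF a b] by simp
  qed
  have le1: "Limsup at_top (\<lambda>t. ereal (R t z)) \<le> 1"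
  proof (rule Limsup_bounded, rule always_eventually, rule allI)
    fix t
    have "R t z \<le> 1" unfolding R_def by (rule ratio_le1[OF Nz])
    then show "ereal (R t z) \<le> 1" by simp
  qed
  have "\<not> Limsup at_top (\<lambda>t. ereal (R t z)) < 1"
  proof
    assume "Limsup at_top (\<lambda>t. ereal (R t z)) < 1"
    then obtain c where c: "Limsup at_top (\<lambda>t. ereal (R t z)) < ereal c" "ereal c < 1"
      using ereal_dense2 by blast
    have "eventually (\<lambda>t. ereal (R t z) < ereal c) at_top"
      by (rule Limsup_lessD[OF c(1)])
    then obtain T where T: "\<And>t. t \<ge> T \<Longrightarrow> R t z < c"
      by (auto simp: eventually_at_top_linorder)
    have "c < 1" using c(2) by simp
    then have "eventually (\<lambda>k. e k < 1 - c) sequentially"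
      using order_tendstoD(2)[OF e0, of "1 - c"] by simp
    then obtain K1 where K1: "\<And>k. k \<ge> K1 \<Longrightarrow> e k < 1 - c"
      by (auto simp: eventually_sequentially)
    define k where "k = max K1 (nat \<lceil>T\<rceil>)"
    have "T \<le> real k" unfolding k_def by linarith
    also have "real k \<le> real (r k)" using seq_suble[OF r, of k] by simp
    also have "\<dots> \<le> tk (r k)" by (rule tk(1))
    finally have "R (tk (r k)) z < c" by (rule T)
    moreover have "e k < 1 - c" using K1 unfolding k_def by simp
    ultimately show False using key[of k] by linarith
  qed
  with le1 have "Limsup at_top (\<lambda>t. ereal (R t z)) = 1" by auto
  then show ?thesis using Nz unfolding R_def by blast
qed

end


lemma sum_mat_vec: "finite S \<Longrightarrow> (sum F S) *v x = (\<Sum>i\<in>S. F i *v x)"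
  by (induction S rule: finite_induct) (simp_all add: matrix_vector_mult_add_rdistrib)

lemma outer_mult: "outer a b *v x = rowmul b x *s a"
  by (simp add: vec_eq_iff outer_def rowmul_def matrix_vector_mult_def sum_distrib_left algebra_simps)

lemma rowmul_smult: "rowmul w (c *s x) = c * rowmul w x"
  by (simp add: rowmul_def sum_distrib_left algebra_simps)

lemma rowmul_sum: "finite S \<Longrightarrow> rowmul w (sum f S) = (\<Sum>i\<in>S. rowmul w (f i))"
  unfolding rowmul_def by (simp add: sum_component sum_distrib_left) (rule sum.swap)

lemma Q1_nonzero:
  fixes v w :: "nat \<Rightarrow> nat \<Rightarrow> nat \<Rightarrow> complex^'n"
  assumes m_pos: "\<forall>i\<in>{1..p}. \<forall>j\<in>{1..d i}. 1 \<le> m i j"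
    and dual: "\<forall>i\<in>{1..p}. \<forall>j\<in>{1..d i}. \<forall>k\<in>{1..m i j}.
               \<forall>i'\<in>{1..p}. \<forall>j'\<in>{1..d i'}. \<forall>k'\<in>{1..m i' j'}.
                 rowmul (w i j k) (v i' j' k') = (if (i, j, k) = (i', j', k') then 1 else 0)"
    and i0: "(i0, j0) \<in> top_chains p lam d m"
    and nz: "rowmul (w i0 j0 (M1 p lam d m)) u \<noteq> 0"
  shows "Q1 p lam d m v w t *v u \<noteq> 0"
proof
  assume H: "Q1 p lam d m v w t *v u = 0"
  let ?TC = "top_chains p lam d m" and ?M = "M1 p lam d m"
  let ?e = "\<lambda>i. exp (\<i> * complex_of_real (Im (lam i) * t))"
  have TCsub: "?TC \<subseteq> Sigma {1..p} (\<lambda>i. {1..d i})"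
    by (auto simp: top_chains_def Lam1_def)
  have fin: "finite ?TC" by (rule finite_subset[OF TCsub]) auto
  have mem: "i \<in> {1..p} \<and> j \<in> {1..d i} \<and> m i j = ?M" if "(i, j) \<in> ?TC" for i j
    using that by (auto simp: top_chains_def Lam1_def)
  have "rowmul (w i0 j0 1) (Q1 p lam d m v w t *v u)
      = (\<Sum>(i, j)\<in>?TC. rowmul (w i j ?M) u * ?e i * rowmul (w i0 j0 1) (v i j 1))"
    unfolding Q1_def
    by (simp add: sum_mat_vec[OF fin] rowmul_sum[OF fin] outer_mult rowmul_smult case_prod_unfold
        algebra_simps)
  also have "\<dots> = (\<Sum>q\<in>?TC. if q = (i0, j0) then rowmul (w i0 j0 ?M) u * ?e i0 else 0)"
  proof (rule sum.cong[OF refl])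
    fix q assume q: "q \<in> ?TC"
    obtain i j where qij: "q = (i, j)" by (cases q)
    have a: "i \<in> {1..p}" "j \<in> {1..d i}" "m i j = ?M" using mem q qij by auto
    have b: "i0 \<in> {1..p}" "j0 \<in> {1..d i0}" using mem[OF i0] by auto
    have "rowmul (w i0 j0 1) (v i j 1) = (if (i0, j0, 1::nat) = (i, j, 1) then 1 else 0)"
      using dual b a m_pos by (meson atLeastAtMost_iff order_refl)
    then show "(case q of (i, j) \<Rightarrow> rowmul (w i j ?M) u * ?e i * rowmul (w i0 j0 1) (v i j 1))
        = (if q = (i0, j0) then rowmul (w i0 j0 ?M) u * ?e i0 else 0)"
      using qij by auto
  qed
  also have "\<dots> = rowmul (w i0 j0 ?M) u * ?e i0"
    using fin i0 by (simp add: sum.delta')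
  finally have "rowmul (w i0 j0 1) (Q1 p lam d m v w t *v u) \<noteq> 0" using nz by simp
  then show False using H by (simp add: rowmul_def)
qed


lemma limsup_le1:
  assumes Nn: "is_vec_norm N" and Nz: "N z = 1"
  shows "Limsup at_top (\<lambda>t. ereal ((N (M t *v z) / N (M t *v u)) / (ind_norm N (M t) / N (M t *v u)))) \<le> 1"
proof (rule Limsup_bounded, rule always_eventually, rule allI)
  fix t
  have "(N (M t *v z) / N (M t *v u)) / (ind_norm N (M t) / N (M t *v u)) \<le> 1"
    by (rule ratio_le1[OF Nn Nz])
  then show "ereal ((N (M t *v z) / N (M t *v u)) / (ind_norm N (M t) / N (M t *v u))) \<le> 1" by simp
qed

lemma final_part:
  fixes M :: "real \<Rightarrow> complex^'n^'n"
  assumes Nn: "is_vec_norm N" and u: "N u = 1" and freq: "\<forall>T. \<exists>t\<ge>T. M t *v u \<noteq> 0"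
  shows "let S = (\<lambda>z0. Limsup at_top (\<lambda>t. ereal ((N (M t *v z0) / N (M t *v u)) / (ind_norm N (M t) / N (M t *v u))))) ` {z0. N z0 = 1}
     in 1 \<in> S \<and> (\<forall>s\<in>S. s \<le> 1)"
  unfolding Let_def
proof
  obtain z where "N z = 1" "Limsup at_top (\<lambda>t. ereal ((N (M t *v z) / N (M t *v u)) / (ind_norm N (M t) / N (M t *v u)))) = 1"
    using limsup_main[OF Nn u freq] by blast
  then show "1 \<in> (\<lambda>z0. Limsup at_top (\<lambda>t. ereal ((N (M t *v z0) / N (M t *v u)) / (ind_norm N (M t) / N (M t *v u))))) ` {z0. N z0 = 1}"
    by (intro image_eqI[of _ _ z]) auto
  show "\<forall>s\<in>(\<lambda>z0. Limsup at_top (\<lambda>t. ereal ((N (M t *v z0) / N (M t *v u)) / (ind_norm N (M t) / N (M t *v u))))) ` {z0. N z0 = 1}. s \<le> 1"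
    using limsup_le1[OF Nn] by blast
qed

theorem mainTheorem3:
  fixes A :: "complex^'n^'n" and N :: "complex^'n \<Rightarrow> real" and y0 :: "complex^'n"
    and p :: nat and lam :: "nat \<Rightarrow> complex" and d :: "nat \<Rightarrow> nat"
    and m :: "nat \<Rightarrow> nat \<Rightarrow> nat" and v w :: "nat \<Rightarrow> nat \<Rightarrow> nat \<Rightarrow> complex^'n"
  assumes norm: "is_vec_norm N"
    and y0: "y0 \<noteq> 0"
    and lam_distinct: "inj_on lam {1..p}"
    and d_pos: "\<forall>i\<in>{1..p}. 1 \<le> d i"
    and m_pos: "\<forall>i\<in>{1..p}. \<forall>j\<in>{1..d i}. 1 \<le> m i j"
    and chain1: "\<forall>i\<in>{1..p}. \<forall>j\<in>{1..d i}. A *v v i j 1 = lam i *s v i j 1"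
    and chaink: "\<forall>i\<in>{1..p}. \<forall>j\<in>{1..d i}. \<forall>k\<in>{2..m i j}.
                   A *v v i j k = lam i *s v i j k + v i j (k - 1)"
    and dual: "\<forall>i\<in>{1..p}. \<forall>j\<in>{1..d i}. \<forall>k\<in>{1..m i j}.
               \<forall>i'\<in>{1..p}. \<forall>j'\<in>{1..d i'}. \<forall>k'\<in>{1..m i' j'}.
                 rowmul (w i j k) (v i' j' k') = (if (i, j, k) = (i', j', k') then 1 else 0)"
    and span: "\<forall>x. x = (\<Sum>(i, j, k)\<in>{(i, j, k). i \<in> {1..p} \<and> j \<in> {1..d i} \<and> k \<in> {1..m i j}}.
                          rowmul (w i j k) x *s v i j k)"
  shows "(let S = (\<lambda>z0. Limsup at_top (\<lambda>t. ereal (K3 N A t y0 z0 / K2 N A t y0))) ` {z0. N z0 = 1}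
          in 1 \<in> S \<and> (\<forall>s\<in>S. s \<le> 1))
     \<and> (RLGE p lam d m w y0 \<longrightarrow>
         (let S = (\<lambda>z0. Limsup at_top (\<lambda>t. ereal (Kinf3 N p lam d m v w t y0 z0 / Kinf2 N p lam d m v w t y0)))
                   ` {z0. N z0 = 1}
          in 1 \<in> S \<and> (\<forall>s\<in>S. s \<le> 1)))"
  proof -
  have Ny: "N y0 > 0" using y0 N_eq0[OF norm] N_nonneg[OF norm] less_eq_real_def by metis
  define u where "u = normalize N y0"
  have u1: "N u = 1" unfolding u_def normalize_def using Ny by (simp add: N_scale[OF norm] norm_divide)
  have unz: "u \<noteq> 0" using u1 N_zero[OF norm] by auto
  have P1: "let S = (\<lambda>z0. Limsup at_top (\<lambda>t. ereal ((N (mexp t A *v z0) / N (mexp t A *v u)) / (ind_norm N (mexp t A) / N (mexp t A *v u))))) ` {z0. N z0 = 1}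
     in 1 \<in> S \<and> (\<forall>s\<in>S. s \<le> 1)"
  proof (rule final_part[OF norm u1], intro allI exI conjI)
    fix T :: real
    show "T \<le> T" by simp
    show "mexp T A *v u \<noteq> 0" using mexp_inj unz by blast
  qed
  have P2: "let S = (\<lambda>z0. Limsup at_top (\<lambda>t. ereal (Kinf3 N p lam d m v w t y0 z0 / Kinf2 N p lam d m v w t y0))) ` {z0. N z0 = 1}
          in 1 \<in> S \<and> (\<forall>s\<in>S. s \<le> 1)" if R: "RLGE p lam d m w y0"
  proof -
    obtain i0 j0 where i0: "(i0, j0) \<in> top_chains p lam d m"
      and nz0: "rowmul (w i0 j0 (M1 p lam d m)) y0 \<noteq> 0"
      using R unfolding RLGE_def by blast
    have nz: "rowmul (w i0 j0 (M1 p lam d m)) u \<noteq> 0"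
      unfolding u_def normalize_def using nz0 Ny by (simp add: rowmul_smult)
    show ?thesis unfolding Kinf3_def Kinf2_def u_def[symmetric]
    proof (rule final_part[OF norm u1], intro allI exI conjI)
      fix T :: real
      show "T \<le> T" by simp
      show "Q1 p lam d m v w T *v u \<noteq> 0" by (rule Q1_nonzero[OF m_pos dual i0 nz])
    qed
  qed
  show ?thesis using P1 P2 unfolding K3_def K2_def u_def by blast
qed

end
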